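(* Let $K$ be a number field, let $\mathcal{P}$ be the set of nonzero prime ideals of $K$, and let $\mathrm{N}=\mathrm{N}_{K/\mathbb{Q}}$ denote the absolute norm. Let $\mathcal{A}\subseteq\mathcal{P}$ be a subset such that there exist constants $\delta\geq 0$ and $C\in\mathbb{R}$ (depending at most on $\mathcal{A}$) with \[ \sum_{\substack{\mathfrak{p}\in\mathcal{A}\\ \mathrm{N}\mathfrak{p}\leq x}}\frac{1}{\mathrm{N}\mathfrak{p}}=\delta\log\log x+C+o\Big(\frac{1}{\log x}\Big)\qquad (x\to\infty). \] Let $b\geq 2$ be an integer, let $m\geq 1$, and let $S$ be a string of $m$ base-$b$ digits $a_1a_2\cdots a_m$ with $a_1\neq 0$; we also write $S$ for the positive integer $\sum_{i=1}^m a_i b^{m-i}$ whose base-$b$ expansion is this string. Let $\mathcal{A}_{b,S}$ be the set of $\mathfrak{p}\in\mathcal{A}$ such that the base-$b$ expansion of $\mathrm{N}\mathfrak{p}$ begins with the string $S$. Then the logarithmic density of $\mathcal{A}_{b,S}$ exists and \[ d(\mathcal{A}_{b,S})=\delta\log_b\big(1+S^{-1}\big). \]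
   Context: For a set $\mathcal{B}$ of prime ideals of $K$, define \[ \overline{d(\mathcal{B})}=\limsup_{x\to\infty}\frac{1}{\log\log x}\sum_{\substack{\mathfrak{p}\in\mathcal{B}\\ \mathrm{N}\mathfrak{p}\leq x}}\frac{1}{\mathrm{N}\mathfrak{p}},\qquad \underline{d(\mathcal{B})}=\liminf_{x\to\infty}\frac{1}{\log\log x}\sum_{\substack{\mathfrak{p}\in\mathcal{B}\\ \mathrm{N}\mathfrak{p}\leq x}}\frac{1}{\mathrm{N}\mathfrak{p}}. \] If these are equal, their common value is the logarithmic density $d(\mathcal{B})$ of $\mathcal{B}$. *)

theory Defs
  imports "HOL-Analysis.Analysis" "HOL-Computational_Algebra.Polynomial"
          "HOL-Library.Landau_Symbols" "HOL-Library.Sublist"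
begin

definition number_field :: "complex set \<Rightarrow> bool" where
  "number_field K \<longleftrightarrow>
     0 \<in> K \<and> 1 \<in> K \<and>
     (\<forall>x\<in>K. \<forall>y\<in>K. x + y \<in> K \<and> x - y \<in> K \<and> x * y \<in> K) \<and>
     (\<forall>x\<in>K. x \<noteq> 0 \<longrightarrow> inverse x \<in> K) \<and>
     (\<exists>B. finite B \<and> B \<subseteq> K \<and>
          (\<forall>x\<in>K. \<exists>c :: complex \<Rightarrow> rat. x = (\<Sum>b\<in>B. of_rat (c b) * b)))"

definition ring_of_integers :: "complex set \<Rightarrow> complex set" where
  "ring_of_integers K = {x \<in> K. algebraic_int x}"

definition is_ideal :: "complex set \<Rightarrow> complex set \<Rightarrow> bool" where
  "is_ideal K I \<longleftrightarrow> I \<subseteq> ring_of_integers K \<and> 0 \<in> I \<and>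
     (\<forall>x\<in>I. \<forall>y\<in>I. x + y \<in> I \<and> x - y \<in> I) \<and>
     (\<forall>r\<in>ring_of_integers K. \<forall>x\<in>I. r * x \<in> I)"

definition nonzero_primes :: "complex set \<Rightarrow> complex set set" where
  "nonzero_primes K = {P. is_ideal K P \<and> P \<noteq> {0} \<and> P \<noteq> ring_of_integers K \<and>
     (\<forall>x\<in>ring_of_integers K. \<forall>y\<in>ring_of_integers K. x * y \<in> P \<longrightarrow> x \<in> P \<or> y \<in> P)}"

(* absolute norm of an ideal: the index [O_K : I], i.e. the number of cosets x + I *)
definition abs_norm :: "complex set \<Rightarrow> complex set \<Rightarrow> nat" where
  "abs_norm K I = card ((\<lambda>x. (\<lambda>y. x + y) ` I) ` ring_of_integers K)"

definition recip_norm_sum :: "complex set \<Rightarrow> complex set set \<Rightarrow> real \<Rightarrow> real" where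
  "recip_norm_sum K B x = (\<Sum>P\<in>{P\<in>B. real (abs_norm K P) \<le> x}. 1 / real (abs_norm K P))"

definition upper_log_density :: "complex set \<Rightarrow> complex set set \<Rightarrow> ereal" where
  "upper_log_density K B =
     Limsup at_top (\<lambda>x::real. ereal (recip_norm_sum K B x / ln (ln x)))"

definition lower_log_density :: "complex set \<Rightarrow> complex set set \<Rightarrow> ereal" where
  "lower_log_density K B =
     Liminf at_top (\<lambda>x::real. ereal (recip_norm_sum K B x / ln (ln x)))"

(* base-b digit string of n (most significant digit first); for n \<ge> 1, b \<ge> 2
   this has no leading zero *)
fun base_digits :: "nat \<Rightarrow> nat \<Rightarrow> nat list" where
  "base_digits b n = (if b < 2 \<or> n < b then [n] else base_digits b (n div b) @ [n mod b])"

definition digit_value :: "nat \<Rightarrow> nat list \<Rightarrow> nat" where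
  "digit_value b S = (\<Sum>i<length S. S ! i * b ^ (length S - 1 - i))"

definition leading_digit_subset :: "complex set \<Rightarrow> complex set set \<Rightarrow> nat \<Rightarrow> nat list \<Rightarrow> complex set set" where
  "leading_digit_subset K A b S = {P\<in>A. prefix S (base_digits b (abs_norm K P))}"

end

theory Submission
  imports Defs "HOL-Real_Asymp.Real_Asymp"
begin


lemma nf_of_nat: assumes "number_field K" shows "of_nat n \<in> K"
proof (induction n)
  case 0 then show ?case using assms by (simp add: number_field_def)
next
  case (Suc n)
  have "1 \<in> K" using assms by (simp add: number_field_def)
  then show ?case using Suc assms unfolding number_field_def by (metis of_nat_Suc add.commute)
qed

lemma nf_of_int: assumes "number_field K" shows "of_int n \<in> K"
proof (cases "n \<ge> 0")
  case True then show ?thesis using nf_of_nat[OF assms, of "nat n"] by simp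
next
  case False
  have "(0::complex) - of_nat (nat (-n)) \<in> K" using nf_of_nat[OF assms, of "nat (-n)"] assms
    unfolding number_field_def by blast
  then show ?thesis using False by simp
qed

lemma roi_of_int: assumes "number_field K" shows "of_int n \<in> ring_of_integers K"
  unfolding ring_of_integers_def using nf_of_int[OF assms] int_imp_algebraic_int[of "of_int n :: complex"]
  by auto

lemma roi_sub: "ring_of_integers K \<subseteq> K" by (auto simp: ring_of_integers_def)

context
  fixes K P
  assumes nf: "number_field K" and PI: "is_ideal K P"
begin

lemma I_sub: "P \<subseteq> ring_of_integers K" using PI by (simp add: is_ideal_def)
lemma I_0: "0 \<in> P" using PI by (simp add: is_ideal_def)
lemma I_add: "x \<in> P \<Longrightarrow> y \<in> P \<Longrightarrow> x + y \<in> P" using PI by (simp add: is_ideal_def)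
lemma I_diff: "x \<in> P \<Longrightarrow> y \<in> P \<Longrightarrow> x - y \<in> P" using PI by (simp add: is_ideal_def)
lemma I_mult: "r \<in> ring_of_integers K \<Longrightarrow> x \<in> P \<Longrightarrow> r * x \<in> P" using PI by (simp add: is_ideal_def)
lemma I_uminus: "x \<in> P \<Longrightarrow> - x \<in> P" using I_diff[OF I_0] by fastforce
lemma I_int_mult: "x \<in> P \<Longrightarrow> of_int n * x \<in> P" using I_mult roi_of_int[OF nf] by blast
lemma I_sum: "finite F \<Longrightarrow> (\<And>i. i \<in> F \<Longrightarrow> f i \<in> P) \<Longrightarrow> (\<Sum>i\<in>F. f i) \<in> P"
  by (induction F rule: finite_induct) (auto intro: I_0 I_add)
lemma I_pow: "a \<in> P \<Longrightarrow> a ^ Suc i \<in> P"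
proof (induction i)
  case 0 then show ?case by simp
next
  case (Suc i)
  have "a \<in> ring_of_integers K" using Suc.prems I_sub by auto
  then have "a * a ^ Suc i \<in> P" using Suc I_mult by blast
  then show ?case by simp
qed

lemma I_one: "1 \<in> P \<Longrightarrow> P = ring_of_integers K"
  using I_mult[of _ 1] I_sub by force

lemma I_poly_mult: assumes "a \<in> P" shows "a * poly (map_poly of_int q) a \<in> P"
proof -
  have "a * poly (map_poly of_int q) a = (\<Sum>i\<le>degree (map_poly (of_int::int\<Rightarrow>complex) q). coeff (map_poly of_int q) i * a ^ Suc i)"
    by (simp add: poly_altdef sum_distrib_left algebra_simps)
  also have "\<dots> \<in> P"
    by (rule I_sum) (auto simp: coeff_map_poly intro!: I_int_mult assms I_pow[OF assms, simplified])
  finally show ?thesis .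
qed

lemma I_int_aux: "q \<noteq> 0 \<Longrightarrow> poly (map_poly of_int q) a = 0 \<Longrightarrow> a \<in> P \<Longrightarrow> a \<noteq> 0 \<Longrightarrow> \<exists>c::int. c \<noteq> 0 \<and> of_int c \<in> P"
proof (induction q rule: pCons_induct)
  case 0 then show ?case by simp
next
  case (pCons c q)
  show ?case
  proof (cases "c = 0")
    case False
    have "poly (map_poly of_int (pCons c q)) a = of_int c + a * poly (map_poly of_int q) a"
      using False by (simp add: map_poly_pCons)
    then have "of_int c = - (a * poly (map_poly of_int q) a)" using pCons.prems by (simp add: eq_neg_iff_add_eq_0)
    then show ?thesis using False I_uminus I_poly_mult pCons.prems by metis
  next
    case True
    then have q0: "q \<noteq> 0" using pCons.hyps by auto
    have "poly (map_poly of_int (pCons c q)) a = a * poly (map_poly of_int q) a"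
      using True q0 by (simp add: map_poly_pCons)
    then have "poly (map_poly of_int q) a = 0" using pCons.prems by simp
    then show ?thesis using pCons q0 by blast
  qed
qed

end


lemma np_ideal: "P \<in> nonzero_primes K \<Longrightarrow> is_ideal K P" by (simp add: nonzero_primes_def)

lemma np_prime_nat: assumes nf: "number_field K" and P: "P \<in> nonzero_primes K"
  shows "n \<ge> 1 \<Longrightarrow> of_nat n \<in> P \<Longrightarrow> \<exists>p::nat. prime p \<and> of_nat p \<in> P"
proof (induction n rule: less_induct)
  case (less n)
  have PI: "is_ideal K P" using P by (simp add: nonzero_primes_def)
  have n1: "n \<noteq> 1"
  proof
    assume "n = 1"
    then have "1 \<in> P" using less by simp
    then show False using I_one[OF nf PI] P by (simp add: nonzero_primes_def)
  qed
  then obtain p where p: "prime p" "p dvd n" using prime_factor_nat by blast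
  then obtain m where m: "n = p * m" by blast
  have "of_nat p * of_nat m \<in> P" using less m by simp
  moreover have "of_nat p \<in> ring_of_integers K" "of_nat m \<in> ring_of_integers K"
    using roi_of_int[OF nf, of "int p"] roi_of_int[OF nf, of "int m"] by auto
  ultimately have "of_nat p \<in> P \<or> of_nat m \<in> P" using P unfolding nonzero_primes_def by blast
  then show ?case
  proof
    assume "of_nat m \<in> P"
    moreover have "m < n" "m \<ge> 1" using m less.prems p prime_gt_1_nat[OF p(1)] by (auto intro!: Nat.gr0I)
    ultimately show ?thesis using less.IH by blast
  qed (use p in blast)
qed

lemma np_prime: assumes nf: "number_field K" and P: "P \<in> nonzero_primes K"
  shows "\<exists>p::int. prime p \<and> of_int p \<in> P"
proof -
  have PI: "is_ideal K P" using P by (simp add: nonzero_primes_def)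
  obtain a where a: "a \<in> P" "a \<noteq> 0" using P I_0[OF nf PI] by (auto simp: nonzero_primes_def)
  then have "algebraic_int a" using I_sub[OF nf PI] by (auto simp: ring_of_integers_def)
  then obtain q where q: "poly (map_poly of_int q) a = 0" "lead_coeff q = 1"
    using algebraic_int_altdef_ipoly by blast
  then have "q \<noteq> 0" by auto
  then obtain c :: int where c: "c \<noteq> 0" "of_int c \<in> P" using I_int_aux[OF nf PI] q a by blast
  have "of_int \<bar>c\<bar> \<in> P" using c I_uminus[OF nf PI] by (cases "c \<ge> 0") auto
  then have "of_nat (nat \<bar>c\<bar>) \<in> P" by simp
  then obtain p :: nat where "prime p" "of_nat p \<in> P" using np_prime_nat[OF nf P, of "nat \<bar>c\<bar>"] c by (metis Suc_leI zero_less_nat_eq zero_less_abs_iff One_nat_def)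
  then show ?thesis by (intro exI[of _ "int p"]) auto
qed


inductive_set pM :: "complex set \<Rightarrow> int \<Rightarrow> complex set" for K p where
  pM_base: "y \<in> ring_of_integers K \<Longrightarrow> of_int p * y \<in> pM K p"
| pM_zero: "0 \<in> pM K p"
| pM_add: "u \<in> pM K p \<Longrightarrow> v \<in> pM K p \<Longrightarrow> u + v \<in> pM K p"
| pM_neg: "u \<in> pM K p \<Longrightarrow> -u \<in> pM K p"

lemma pM_diff: "u \<in> pM K p \<Longrightarrow> v \<in> pM K p \<Longrightarrow> u - v \<in> pM K p"
  using pM_add[OF _ pM_neg] by fastforce

lemma pM_nat_mult: "u \<in> pM K p \<Longrightarrow> of_nat n * u \<in> pM K p"
  by (induction n) (auto simp: distrib_right intro: pM_add pM_zero)

lemma pM_int_mult: assumes "u \<in> pM K p" shows "of_int n * u \<in> pM K p"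
proof (cases "n \<ge> 0")
  case True then show ?thesis using pM_nat_mult[OF assms, of "nat n"] by simp
next
  case False then show ?thesis using pM_neg[OF pM_nat_mult[OF assms, of "nat (-n)"]] by simp
qed

lemma pM_sum: "finite F \<Longrightarrow> (\<And>i. i \<in> F \<Longrightarrow> f i \<in> pM K p) \<Longrightarrow> (\<Sum>i\<in>F. f i) \<in> pM K p"
  by (induction F rule: finite_induct) (auto intro: pM_zero pM_add)

lemma pM_sub_ideal: assumes nf: "number_field K" and PI: "is_ideal K P" and p: "of_int p \<in> P"
  shows "pM K p \<subseteq> P"
proof
  fix x assume "x \<in> pM K p" then show "x \<in> P"
  proof induction
    case (pM_base y) then show ?case using I_mult[OF nf PI, of y "of_int p"] p by (simp add: mult.commute)
  qed (auto intro: I_0[OF nf PI] I_add[OF nf PI] I_uminus[OF nf PI])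
qed

definition pind :: "complex set \<Rightarrow> int \<Rightarrow> complex set \<Rightarrow> bool" where
  "pind K p Y \<longleftrightarrow> finite Y \<and> Y \<subseteq> ring_of_integers K \<and>
     (\<forall>a. (\<forall>y\<in>Y. 0 \<le> a y \<and> a y < p) \<longrightarrow> (\<Sum>y\<in>Y. of_int (a y) * y) \<in> pM K p \<longrightarrow> (\<forall>y\<in>Y. a y = 0))"

lemma int_dep_not_pind:
  assumes p: "prime p" and Y: "finite Y" "Y \<subseteq> ring_of_integers K"
    and d: "(\<Sum>v\<in>Y. of_int (d v) * v) = (0::complex)" "v0 \<in> Y" "d v0 \<noteq> 0"
  shows "\<not> pind K p Y"
proof
  assume ind: "pind K p Y"
  define Q where "Q = (\<lambda>d::complex \<Rightarrow> int. (\<Sum>v\<in>Y. of_int (d v) * v) = (0::complex) \<and> (\<exists>v\<in>Y. d v \<noteq> 0))"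
  define \<mu> where "\<mu> = (\<lambda>d::complex \<Rightarrow> int. \<Sum>v\<in>Y. nat \<bar>d v\<bar>)"
  have "Q d" using d by (auto simp: Q_def)
  then obtain e where e: "Q e" and emin: "\<And>f. Q f \<Longrightarrow> \<mu> e \<le> \<mu> f"
    using ex_has_least_nat[of Q d \<mu>] by blast
  have p2: "p \<ge> 2" using p prime_ge_2_int by blast
  have "\<exists>v1\<in>Y. \<not> p dvd e v1"
  proof (rule ccontr)
    assume "\<not> ?thesis"
    then have dv: "\<And>v. v \<in> Y \<Longrightarrow> e v = p * (e v div p)" by auto
    define f where "f = (\<lambda>v. e v div p)"
    obtain v1 where v1: "v1 \<in> Y" "e v1 \<noteq> 0" using e by (auto simp: Q_def)
    have "of_int p * (\<Sum>v\<in>Y. of_int (f v) * v) = (\<Sum>v\<in>Y. of_int (e v) * (v::complex))"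
      unfolding sum_distrib_left
      by (rule sum.cong) (auto simp: f_def dv[symmetric] mult.assoc[symmetric] of_int_mult[symmetric] simp del: of_int_mult)
    also have "\<dots> = 0" using e by (simp add: Q_def)
    finally have "(\<Sum>v\<in>Y. of_int (f v) * v) = (0::complex)" using p2 by simp
    moreover have "f v1 \<noteq> 0" using dv[OF v1(1)] v1(2) by (auto simp: f_def)
    ultimately have "Q f" using v1 by (auto simp: Q_def)
    have "\<mu> f < \<mu> e" unfolding \<mu>_def
    proof (rule sum_strict_mono_ex1[OF Y(1)])
      show "\<forall>x\<in>Y. nat \<bar>f x\<bar> \<le> nat \<bar>e x\<bar>"
      proof
        fix x assume "x \<in> Y"
        then have "\<bar>e x\<bar> = \<bar>p\<bar> * \<bar>f x\<bar>" using dv by (metis abs_mult f_def)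
        then show "nat \<bar>f x\<bar> \<le> nat \<bar>e x\<bar>" using p2 by (simp add: mult_le_cancel_right1 nat_mono)
      qed
      have "\<bar>e v1\<bar> = \<bar>p\<bar> * \<bar>f v1\<bar>" using dv[OF v1(1)] by (metis abs_mult f_def)
      then have "nat \<bar>f v1\<bar> < nat \<bar>e v1\<bar>" using p2 \<open>f v1 \<noteq> 0\<close> by (simp add: nat_less_eq_zless)
      then show "\<exists>a\<in>Y. nat \<bar>f a\<bar> < nat \<bar>e a\<bar>" using v1 by blast
    qed
    then show False using emin[OF \<open>Q f\<close>] by simp
  qed
  then obtain v1 where v1: "v1 \<in> Y" "\<not> p dvd e v1" by blast
  define a where "a = (\<lambda>v. e v mod p)"
  have arng: "\<forall>y\<in>Y. 0 \<le> a y \<and> a y < p" using p2 by (auto simp: a_def)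
  have "(\<Sum>v\<in>Y. of_int (a v) * v) = (\<Sum>v\<in>Y. of_int (e v) * v - of_int (e v div p) * (of_int p * v))"
  proof (rule sum.cong)
    fix v assume "v \<in> Y"
    have "e v = p * (e v div p) + a v" by (simp add: a_def)
    then have "(of_int (e v) :: complex) = of_int p * of_int (e v div p) + of_int (a v)"
      by (metis of_int_add of_int_mult)
    then show "of_int (a v) * v = of_int (e v) * v - of_int (e v div p) * (of_int p * v)"
      by (simp add: algebra_simps)
  qed simp
  also have "\<dots> = - (\<Sum>v\<in>Y. of_int (e v div p) * (of_int p * v))"
    using e by (simp add: Q_def sum_subtractf)
  also have "\<dots> \<in> pM K p"
    by (intro pM_neg pM_sum Y(1) pM_int_mult pM_base) (use Y in auto)
  finally have "\<forall>y\<in>Y. a y = 0" using ind arng by (auto simp: pind_def)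
  then show False using v1 by (auto simp: a_def dvd_eq_mod_eq_0)
qed

lemma vsQ: "vector_space (\<lambda>(q::rat) (z::complex). of_rat q * z)"
  by unfold_locales (auto simp: algebra_simps of_rat_add of_rat_mult)

lemma rat_to_int:
  assumes Y: "finite Y" and c: "(\<Sum>v\<in>Y. of_rat (c v) * v) = (0::complex)" "v0 \<in> Y" "c v0 \<noteq> 0"
  shows "\<exists>d. (\<Sum>v\<in>Y. of_int (d v) * v) = (0::complex) \<and> d v0 \<noteq> 0"
proof -
  define D where "D = (\<Prod>v\<in>Y. snd (quotient_of (c v)))"
  define d where "d = (\<lambda>v. fst (quotient_of (c v)) * (D div snd (quotient_of (c v))))"
  have Dpos: "D > 0" unfolding D_def
    by (rule prod_pos) (metis quotient_of_denom_pos prod.collapse)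
  have key: "of_rat (c v) * of_int D = (of_int (d v) :: complex)" if v: "v \<in> Y" for v
  proof -
    obtain n m where nm: "quotient_of (c v) = (n, m)" by (cases "quotient_of (c v)")
    have m0: "m > 0" using quotient_of_denom_pos[OF nm] .
    have "m dvd D" unfolding D_def using dvd_prodI[OF Y v, of "\<lambda>v. snd (quotient_of (c v))"] nm by simp
    then obtain k where k: "D = m * k" by blast
    have "c v * of_int D = of_int n * of_int k" using quotient_of_div[OF nm] k m0 by simp
    then have "of_rat (c v * of_int D) = (of_rat (of_int (n * k)) :: complex)" by simp
    moreover have "d v = n * k" using nm k m0 by (simp add: d_def)
    ultimately show ?thesis by (simp add: of_rat_mult)
  qed
  have "(\<Sum>v\<in>Y. of_int (d v) * v) = of_int D * (\<Sum>v\<in>Y. of_rat (c v) * (v::complex))"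
    by (simp add: sum_distrib_left key[symmetric] algebra_simps)
  also have "\<dots> = 0" using c by simp
  finally show ?thesis using key[OF c(2)] c(3) Dpos by (intro exI[of _ d]) (auto)
qed

lemma pind_card: assumes nf: "number_field K" and p: "prime p"
  shows "\<exists>N. \<forall>Y. pind K p Y \<longrightarrow> card Y \<le> N"
proof -
  obtain B where B: "finite B" "B \<subseteq> K" "\<forall>x\<in>K. \<exists>c :: complex \<Rightarrow> rat. x = (\<Sum>b\<in>B. of_rat (c b) * b)"
    using nf unfolding number_field_def by blast
  have ms: "module (\<lambda>(q::rat) (z::complex). of_rat q * z)" using vsQ by (simp add: module_iff_vector_space)
  have "card Y \<le> card B" if Y: "pind K p Y" for Y
  proof -
    have Ysp: "Y \<subseteq> module.span (\<lambda>(q::rat) (z::complex). of_rat q * z) B"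
    proof
      fix x assume "x \<in> Y"
      then have "x \<in> K" using Y roi_sub by (auto simp: pind_def)
      then obtain c where c: "x = (\<Sum>b\<in>B. of_rat (c b) * b)" using B by blast
      show "x \<in> module.span (\<lambda>(q::rat) (z::complex). of_rat q * z) B"
        unfolding c
        by (intro module.span_sum[OF ms] module.span_scale[OF ms, of _ _ "c _", simplified] module.span_base[OF ms])
    qed
    have finY: "finite Y" using Y by (simp add: pind_def)
    have ind: "\<not> module.dependent (\<lambda>(q::rat) (z::complex). of_rat q * z) Y"
    proof
      assume "module.dependent (\<lambda>(q::rat) (z::complex). of_rat q * z) Y"
      then obtain c v where c: "v \<in> Y" "c v \<noteq> 0" "(\<Sum>v\<in>Y. of_rat (c v) * v) = 0"
        unfolding module.dependent_finite[OF ms finY] by auto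
      then obtain d where "(\<Sum>v\<in>Y. of_int (d v) * v) = (0::complex)" "d v \<noteq> 0"
        using rat_to_int[of Y c v] finY by auto
      then show False using int_dep_not_pind[OF p, of Y K d v] Y c by (auto simp: pind_def)
    qed
    show ?thesis using vector_space.independent_span_bound[OF vsQ B(1) ind Ysp] by simp
  qed
  then show ?thesis by blast
qed


lemma pind_empty: "pind K p {}" by (simp add: pind_def)

lemma pM_reps: assumes nf: "number_field K" and p: "prime p"
  shows "\<exists>R. finite R \<and> (\<forall>x\<in>ring_of_integers K. \<exists>z\<in>R. x - z \<in> pM K p)"
proof -
  obtain N where N: "\<And>Y. pind K p Y \<Longrightarrow> card Y \<le> N" using pind_card[OF nf p] by blast
  define Pn where "Pn = (\<lambda>n. \<exists>Y. pind K p Y \<and> card Y = n)"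
  have "Pn 0" unfolding Pn_def by (rule exI[of _ "{}"]) (simp add: pind_empty)
  then obtain n where n: "Pn n" and nmax: "\<And>m. Pn m \<Longrightarrow> m \<le> n"
    using Nat.ex_has_greatest_nat[of Pn 0 N] N unfolding Pn_def by blast
  then obtain Y where Y: "pind K p Y" "card Y = n" by (auto simp: Pn_def)
  have finY: "finite Y" and YO: "Y \<subseteq> ring_of_integers K" using Y by (auto simp: pind_def)
  have p2: "p \<ge> 2" using p prime_ge_2_int by blast
  have rep: "\<exists>a. (\<forall>y\<in>Y. 0 \<le> a y \<and> a y < p) \<and> x - (\<Sum>y\<in>Y. of_int (a y) * y) \<in> pM K p"
    if x: "x \<in> ring_of_integers K" for x
  proof (cases "x \<in> Y")
    case True
    define a where "a = (\<lambda>y. if y = x then 1 else 0 :: int)"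
    have "(\<Sum>y\<in>Y. of_int (a y) * y) = (\<Sum>y\<in>Y. if y = x then y else 0)"
      by (rule sum.cong) (auto simp: a_def)
    also have "\<dots> = x" using True finY by (simp add: sum.delta')
    finally show ?thesis using p2 by (intro exI[of _ a]) (auto simp: a_def intro: pM_zero)
  next
    case False
    have "\<not> pind K p (insert x Y)"
    proof
      assume "pind K p (insert x Y)"
      then have "Pn (Suc n)" using False finY Y by (auto simp: Pn_def)
      then show False using nmax by fastforce
    qed
    then obtain a' where a': "\<forall>y\<in>insert x Y. 0 \<le> a' y \<and> a' y < p"
      "(\<Sum>y\<in>insert x Y. of_int (a' y) * y) \<in> pM K p" "\<exists>y\<in>insert x Y. a' y \<noteq> 0"
      using finY YO x unfolding pind_def by auto
    have sins: "(\<Sum>y\<in>insert x Y. of_int (a' y) * y) = of_int (a' x) * x + (\<Sum>y\<in>Y. of_int (a' y) * y)"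
      using False finY by simp
    have ax: "a' x \<noteq> 0"
    proof
      assume "a' x = 0"
      then have "(\<Sum>y\<in>Y. of_int (a' y) * y) \<in> pM K p" using a'(2) sins by simp
      then have "\<forall>y\<in>Y. a' y = 0" using Y a'(1) unfolding pind_def by auto
      then show False using a'(3) \<open>a' x = 0\<close> by auto
    qed
    have ax0: "0 < a' x" "a' x < p" using a'(1) ax by force+
    have "\<not> p dvd a' x"
    proof
      assume "p dvd a' x"
      then have "p \<le> a' x" using zdvd_imp_le ax0(1) by blast
      then show False using ax0 by simp
    qed
    then have "coprime p (a' x)" using p by (simp add: prime_imp_coprime)
    then obtain t r where tr: "t * a' x + r * p = 1"
    proof -
      have "gcd (a' x) p = 1" using \<open>coprime p (a' x)\<close> by (simp add: coprime_commute coprime_iff_gcd_eq_1)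
      then show ?thesis using bezout_int[of "a' x" p] that by auto
    qed
    define a where "a = (\<lambda>y. (- t * a' y) mod p)"
    define k where "k = (\<lambda>y. (t * a' y + a y) div p)"
    have kdef: "t * a' y + a y = p * k y" for y
    proof -
      have "(t * a' y + (- t * a' y) mod p) mod p = (t * a' y + (- t * a' y)) mod p" by (rule mod_add_right_eq)
      then have "(t * a' y + a y) mod p = 0" unfolding a_def by simp
      then have "p dvd t * a' y + a y" by (simp add: dvd_eq_mod_eq_0)
      then show ?thesis unfolding k_def by simp
    qed
    have kc: "of_int p * of_int (k y) = of_int t * of_int (a' y) + (of_int (a y) :: complex)" for y
      using arg_cong[OF kdef[of y], of "of_int :: int \<Rightarrow> complex"] by simp
    have trc: "of_int t * of_int (a' x) = 1 - of_int r * (of_int p :: complex)"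
      using arg_cong[OF tr, of "of_int :: int \<Rightarrow> complex"] by (simp add: algebra_simps)
    have "x - (\<Sum>y\<in>Y. of_int (a y) * y) =
      of_int t * (\<Sum>y\<in>insert x Y. of_int (a' y) * y) + of_int r * (of_int p * x)
       - (\<Sum>y\<in>Y. of_int (k y) * (of_int p * y))"
    proof -
      have "(\<Sum>y\<in>Y. of_int (k y) * (of_int p * y)) = (\<Sum>y\<in>Y. of_int t * (of_int (a' y) * y) + of_int (a y) * y)"
      proof (rule sum.cong)
        fix y assume "y \<in> Y"
        have "of_int (k y) * (of_int p * y) = (of_int p * of_int (k y)) * (y::complex)" by (simp add: algebra_simps)
        also have "\<dots> = (of_int t * of_int (a' y) + of_int (a y)) * y" by (simp only: kc)
        finally show "of_int (k y) * (of_int p * y) = of_int t * (of_int (a' y) * y) + of_int (a y) * y"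
          by (simp add: algebra_simps)
      qed simp
      also have "\<dots> = of_int t * (\<Sum>y\<in>Y. of_int (a' y) * y) + (\<Sum>y\<in>Y. of_int (a y) * y)"
        by (simp add: sum.distrib sum_distrib_left)
      finally have e1: "(\<Sum>y\<in>Y. of_int (k y) * (of_int p * y)) = of_int t * (\<Sum>y\<in>Y. of_int (a' y) * y) + (\<Sum>y\<in>Y. of_int (a y) * y)" .
      have e2: "of_int t * (of_int (a' x) * x) = x - of_int r * (of_int p * x)"
        using arg_cong[OF trc, of "\<lambda>z. z * x"] by (simp add: algebra_simps)
      show ?thesis unfolding sins e1 by (simp add: distrib_left e2)
    qed
    also have "\<dots> \<in> pM K p"
    proof (intro pM_diff pM_add)
      show "of_int t * (\<Sum>y\<in>insert x Y. of_int (a' y) * y) \<in> pM K p" by (rule pM_int_mult[OF a'(2)])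
      show "of_int r * (of_int p * x) \<in> pM K p" by (rule pM_int_mult[OF pM_base[OF x]])
      show "(\<Sum>y\<in>Y. of_int (k y) * (of_int p * y)) \<in> pM K p"
        using YO by (intro pM_sum[OF finY] pM_int_mult pM_base) auto
    qed
    finally show ?thesis using p2 by (intro exI[of _ a]) (auto simp: a_def)
  qed
  define R where "R = (\<lambda>a. \<Sum>y\<in>Y. of_int (a y) * y) ` (Y \<rightarrow>\<^sub>E {0..<p})"
  have "finite R" unfolding R_def using finY by (intro finite_imageI finite_PiE) auto
  moreover have "\<forall>x\<in>ring_of_integers K. \<exists>z\<in>R. x - z \<in> pM K p"
  proof
    fix x assume "x \<in> ring_of_integers K"
    then obtain a where a: "\<forall>y\<in>Y. 0 \<le> a y \<and> a y < p" "x - (\<Sum>y\<in>Y. of_int (a y) * y) \<in> pM K p"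
      using rep by blast
    have "(\<Sum>y\<in>Y. of_int (a y) * y) = (\<Sum>y\<in>Y. of_int (restrict a Y y) * y)" by simp
    moreover have "restrict a Y \<in> Y \<rightarrow>\<^sub>E {0..<p}" using a(1) by auto
    ultimately have "(\<Sum>y\<in>Y. of_int (a y) * y) \<in> R" unfolding R_def by blast
    then show "\<exists>z\<in>R. x - z \<in> pM K p" using a(2) by blast
  qed
  ultimately show ?thesis by blast
qed


lemma coset_eq: assumes nf: "number_field K" and PI: "is_ideal K P" and d: "x - z \<in> P"
  shows "(\<lambda>y. x + y) ` P = (\<lambda>y. z + y) ` P"
proof
  show "(\<lambda>y. x + y) ` P \<subseteq> (\<lambda>y. z + y) ` P"
  proof
    fix w assume "w \<in> (\<lambda>y. x + y) ` P"
    then obtain q where q: "q \<in> P" "w = x + q" by blast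
    then have "(x - z) + q \<in> P" using I_add[OF nf PI] d by blast
    moreover have "w = z + ((x - z) + q)" using q by simp
    ultimately show "w \<in> (\<lambda>y. z + y) ` P" by blast
  qed
next
  show "(\<lambda>y. z + y) ` P \<subseteq> (\<lambda>y. x + y) ` P"
  proof
    fix w assume "w \<in> (\<lambda>y. z + y) ` P"
    then obtain q where q: "q \<in> P" "w = z + q" by blast
    then have "q - (x - z) \<in> P" using I_diff[OF nf PI] d by blast
    moreover have "w = x + (q - (x - z))" using q by simp
    ultimately show "w \<in> (\<lambda>y. x + y) ` P" by blast
  qed
qed

lemma cosets_finite: assumes nf: "number_field K" and PI: "is_ideal K P" and p: "prime p" "of_int p \<in> P"
  shows "finite ((\<lambda>x. (\<lambda>y. x + y) ` P) ` ring_of_integers K)"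
proof -
  obtain R where R: "finite R" "\<forall>x\<in>ring_of_integers K. \<exists>z\<in>R. x - z \<in> pM K p"
    using pM_reps[OF nf p(1)] by blast
  have sub: "pM K p \<subseteq> P" using pM_sub_ideal[OF nf PI p(2)] .
  have "(\<lambda>x. (\<lambda>y. x + y) ` P) ` ring_of_integers K \<subseteq> (\<lambda>z. (\<lambda>y. z + y) ` P) ` R"
  proof
    fix C assume "C \<in> (\<lambda>x. (\<lambda>y. x + y) ` P) ` ring_of_integers K"
    then obtain x where x: "x \<in> ring_of_integers K" "C = (\<lambda>y. x + y) ` P" by blast
    then obtain z where z: "z \<in> R" "x - z \<in> P" using R sub by blast
    then show "C \<in> (\<lambda>z. (\<lambda>y. z + y) ` P) ` R" using coset_eq[OF nf PI z(2)] x by blast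
  qed
  then show ?thesis using R(1) finite_subset by blast
qed

lemma norm_ge: assumes nf: "number_field K" and P: "P \<in> nonzero_primes K" and p: "prime p" "of_int p \<in> P"
  shows "nat p \<le> abs_norm K P"
proof -
  have PI: "is_ideal K P" using P by (simp add: nonzero_primes_def)
  have p2: "p \<ge> 2" using p prime_ge_2_int by blast
  have inj: "inj_on (\<lambda>i::int. (\<lambda>y. of_int i + y) ` P) {0..<p}"
  proof (rule inj_onI)
    fix i j assume ij: "i \<in> {0..<p}" "j \<in> {0..<p}" "(\<lambda>y. of_int i + y) ` P = (\<lambda>y. of_int j + y) ` P"
    have "of_int i \<in> (\<lambda>y. of_int j + y) ` P" using ij(3) I_0[OF nf PI] by (metis add.right_neutral image_eqI)
    then obtain q where q: "q \<in> P" "of_int i = of_int j + q" by blast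
    then have ijP: "of_int (i - j) \<in> P" by simp
    show "i = j"
    proof (rule ccontr)
      assume "i \<noteq> j"
      have "\<not> p dvd (i - j)"
      proof
        assume "p dvd (i - j)"
        then have "p dvd \<bar>i - j\<bar>" by simp
        then have "p \<le> \<bar>i - j\<bar>" using zdvd_imp_le \<open>i \<noteq> j\<close> by simp
        then show False using ij by auto
      qed
      then have "coprime p (i - j)" using p by (simp add: prime_imp_coprime)
      then have "gcd (i - j) p = 1" by (simp add: coprime_commute coprime_iff_gcd_eq_1)
      then obtain u v where uv: "u * (i - j) + v * p = 1" using bezout_int[of "i - j" p] by auto
      have "of_int u * of_int (i - j) + of_int v * of_int p \<in> P"
        using I_add[OF nf PI] I_int_mult[OF nf PI] ijP p(2) by blast
      then have "(1::complex) \<in> P" using arg_cong[OF uv, of "of_int :: int \<Rightarrow> complex"] by simp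
      then show False using I_one[OF nf PI] P by (simp add: nonzero_primes_def)
    qed
  qed
  have img: "(\<lambda>i::int. (\<lambda>y. of_int i + y) ` P) ` {0..<p} \<subseteq> (\<lambda>x. (\<lambda>y. x + y) ` P) ` ring_of_integers K"
    using roi_of_int[OF nf] by blast
  have "card {0..<p} \<le> abs_norm K P"
    unfolding abs_norm_def using card_inj_on_le[OF inj img cosets_finite[OF nf PI p]] .
  then show ?thesis by simp
qed

lemma ideals_p_finite: assumes nf: "number_field K" and p: "prime p"
  shows "finite {P. is_ideal K P \<and> of_int p \<in> P}"
proof -
  obtain R where R: "finite R" "\<forall>x\<in>ring_of_integers K. \<exists>z\<in>R. x - z \<in> pM K p"
    using pM_reps[OF nf p(1)] by blast
  have inj: "inj_on (\<lambda>P. P \<inter> R) {P. is_ideal K P \<and> of_int p \<in> P}"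
  proof (rule inj_onI)
    have half: "P1 \<subseteq> P2" if P1: "is_ideal K P1" "of_int p \<in> P1" and P2: "is_ideal K P2" "of_int p \<in> P2"
      and eq: "P1 \<inter> R = P2 \<inter> R" for P1 P2
    proof
      fix x assume x: "x \<in> P1"
      then have "x \<in> ring_of_integers K" using I_sub[OF nf P1(1)] by blast
      then obtain z where z: "z \<in> R" "x - z \<in> pM K p" using R by blast
      have "x - z \<in> P1" "x - z \<in> P2" using z pM_sub_ideal[OF nf P1] pM_sub_ideal[OF nf P2] by blast+
      then have "x - (x - z) \<in> P1" using I_diff[OF nf P1(1)] x by blast
      then have "z \<in> P2" using z eq by auto
      then have "z + (x - z) \<in> P2" using I_add[OF nf P2(1)] \<open>x - z \<in> P2\<close> by blast
      then show "x \<in> P2" by simp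
    qed
    fix P1 P2 assume "P1 \<in> {P. is_ideal K P \<and> of_int p \<in> P}" "P2 \<in> {P. is_ideal K P \<and> of_int p \<in> P}"
      "P1 \<inter> R = P2 \<inter> R"
    then show "P1 = P2" using half by blast
  qed
  show ?thesis by (rule inj_on_finite[OF inj _ finite_Pow_iff[THEN iffD2, OF R(1)]]) auto
qed

lemma norm_ge2: assumes nf: "number_field K" and P: "P \<in> nonzero_primes K"
  shows "abs_norm K P \<ge> 2"
proof -
  obtain p where p: "prime p" "of_int p \<in> P" using np_prime[OF nf P] by blast
  then show ?thesis using norm_ge[OF nf P p] prime_ge_2_int[OF p(1)] by linarith
qed

lemma bounded_primes_finite: assumes nf: "number_field K"
  shows "finite {P \<in> nonzero_primes K. real (abs_norm K P) \<le> x}"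
proof -
  have "{P \<in> nonzero_primes K. real (abs_norm K P) \<le> x} \<subseteq>
        (\<Union>p\<in>{p. prime p \<and> p \<le> \<lfloor>x\<rfloor>}. {P. is_ideal K P \<and> of_int p \<in> P})"
  proof
    fix P assume P: "P \<in> {P \<in> nonzero_primes K. real (abs_norm K P) \<le> x}"
    then obtain p where p: "prime p" "of_int p \<in> P" using np_prime[OF nf] by blast
    have "nat p \<le> abs_norm K P" using norm_ge[OF nf _ p] P by blast
    then have "real_of_int p \<le> x" using P prime_ge_2_int[OF p(1)] by auto
    then have "p \<le> \<lfloor>x\<rfloor>" by linarith
    then show "P \<in> (\<Union>p\<in>{p. prime p \<and> p \<le> \<lfloor>x\<rfloor>}. {P. is_ideal K P \<and> of_int p \<in> P})"
      using p P by (auto simp: nonzero_primes_def)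
  qed
  moreover have "finite (\<Union>p\<in>{p. prime p \<and> p \<le> \<lfloor>x\<rfloor>}. {P. is_ideal K P \<and> of_int p \<in> P})"
  proof (rule finite_UN_I)
    have "{p. prime p \<and> p \<le> \<lfloor>x\<rfloor>} \<subseteq> {0..\<lfloor>x\<rfloor>}" using prime_ge_0_int by auto
    then show "finite {p. prime p \<and> p \<le> \<lfloor>x\<rfloor>}" using finite_subset by blast
  qed (use ideals_p_finite[OF nf] in auto)
  ultimately show ?thesis using finite_subset by blast
qed


declare base_digits.simps[simp del]

lemma bd_lt: "n < b \<Longrightarrow> base_digits b n = [n]"
  by (subst base_digits.simps) simp

lemma bd_ge: "b \<ge> 2 \<Longrightarrow> \<not> n < b \<Longrightarrow> base_digits b n = base_digits b (n div b) @ [n mod b]"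
  by (subst base_digits.simps) simp

lemma dv_snoc: "digit_value b (xs @ [d]) = b * digit_value b xs + d"
proof -
  have "digit_value b (xs @ [d]) = (\<Sum>i<Suc (length xs). (xs @ [d]) ! i * b ^ (length xs - i))"
    by (simp add: digit_value_def)
  also have "\<dots> = (\<Sum>i<length xs. xs ! i * b ^ (length xs - i)) + d"
    by (simp add: nth_append)
  also have "(\<Sum>i<length xs. xs ! i * b ^ (length xs - i)) = b * digit_value b xs"
    unfolding digit_value_def sum_distrib_left
  proof (rule sum.cong)
    fix i assume "i \<in> {..<length xs}"
    then have "length xs - i = Suc (length xs - 1 - i)" by auto
    then show "xs ! i * b ^ (length xs - i) = b * (xs ! i * b ^ (length xs - 1 - i))" by simp
  qed simp
  finally show ?thesis .
qed

lemma dv_Nil: "digit_value b [] = 0" by (simp add: digit_value_def)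

lemma dv_append: "digit_value b (xs @ ys) = digit_value b xs * b ^ length ys + digit_value b ys"
proof (induction ys rule: rev_induct)
  case Nil then show ?case by (simp add: dv_Nil)
next
  case (snoc y ys)
  have "digit_value b (xs @ ys @ [y]) = b * digit_value b (xs @ ys) + y" using dv_snoc[of b "xs @ ys" y] by simp
  also have "\<dots> = digit_value b xs * b ^ length (ys @ [y]) + digit_value b (ys @ [y])"
    using snoc by (simp add: dv_snoc algebra_simps)
  finally show ?case .
qed

lemma dv_lt: "b \<ge> 1 \<Longrightarrow> \<forall>a\<in>set xs. a < b \<Longrightarrow> digit_value b xs < b ^ length xs"
proof (induction xs rule: rev_induct)
  case Nil then show ?case by (simp add: dv_Nil)
next
  case (snoc x xs)
  then have "digit_value b xs + 1 \<le> b ^ length xs" by simp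
  then have "b * digit_value b xs + b \<le> b * b ^ length xs" by (metis add_mult_distrib2 mult.right_neutral mult_le_mono2)
  then show ?case using snoc by (simp add: dv_snoc)
qed

lemma bd_value: "b \<ge> 2 \<Longrightarrow> digit_value b (base_digits b n) = n"
proof (induction b n rule: base_digits.induct)
  case (1 b n)
  show ?case
  proof (cases "n < b")
    case True then show ?thesis using 1 by (simp add: digit_value_def bd_lt)
  next
    case False
    then have "base_digits b n = base_digits b (n div b) @ [n mod b]" using 1 by (simp add: bd_ge)
    then show ?thesis using 1 False by (simp add: dv_snoc)
  qed
qed

lemma bd_digits: "b \<ge> 2 \<Longrightarrow> \<forall>a\<in>set (base_digits b n). a < b"
proof (induction b n rule: base_digits.induct)
  case (1 b n)
  show ?case
  proof (cases "n < b")
    case True then show ?thesis by (simp add: bd_lt)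
  next
    case False
    have eq: "base_digits b n = base_digits b (n div b) @ [n mod b]" by (rule bd_ge[OF 1(2) False])
    have c: "\<not> (b < 2 \<or> n < b)" using 1(2) False by simp
    have IH: "\<forall>a\<in>set (base_digits b (n div b)). a < b" by (rule 1(1)[OF c 1(2)])
    have "n mod b < b" using 1(2) by simp
    then show ?thesis unfolding eq using IH by auto
  qed
qed

lemma bd_div: "b \<ge> 2 \<Longrightarrow> n div b ^ k \<ge> 1 \<Longrightarrow> \<exists>X. base_digits b n = base_digits b (n div b ^ k) @ X"
proof (induction k arbitrary: n)
  case 0 then show ?case by simp
next
  case (Suc k)
  have "n div b ^ Suc k = (n div b) div b ^ k" by (simp add: div_mult2_eq)
  then have h: "(n div b) div b ^ k \<ge> 1" using Suc by simp
  have "\<not> n < b"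
  proof
    assume "n < b"
    then have "n div b = 0" by simp
    then show False using h by simp
  qed
  then have e1: "base_digits b n = base_digits b (n div b) @ [n mod b]" by (rule bd_ge[OF Suc.prems(1)])
  obtain X where e2: "base_digits b (n div b) = base_digits b ((n div b) div b ^ k) @ X" using Suc.IH[OF Suc.prems(1) h] by blast
  have "base_digits b n = base_digits b (n div b ^ Suc k) @ (X @ [n mod b])"
    unfolding e1 e2 \<open>n div b ^ Suc k = (n div b) div b ^ k\<close> by simp
  then show ?case by blast
qed

lemma bd_valid: "b \<ge> 2 \<Longrightarrow> S \<noteq> [] \<Longrightarrow> \<forall>a\<in>set S. a < b \<Longrightarrow> S ! 0 \<noteq> 0 \<Longrightarrow> base_digits b (digit_value b S) = S"
proof (induction S rule: rev_induct)
  case Nil then show ?case by simp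
next
  case (snoc d S)
  show ?case
  proof (cases "S = []")
    case True then show ?thesis using snoc by (simp add: digit_value_def bd_lt)
  next
    case False
    have S0: "S ! 0 \<noteq> 0" using snoc.prems False by (simp add: nth_append)
    have IH: "base_digits b (digit_value b S) = S" using snoc False S0 by simp
    have "digit_value b S \<noteq> 0"
    proof
      assume "digit_value b S = 0"
      then have "S = [0]" using IH snoc.prems(1) by (simp add: bd_lt)
      then show False using S0 by simp
    qed
    then have "b * 1 \<le> b * digit_value b S" by (intro mult_le_mono2) simp
    then have ge: "digit_value b (S @ [d]) \<ge> b" unfolding dv_snoc by linarith
    have "d < b" using snoc.prems by simp
    then have "digit_value b (S @ [d]) div b = digit_value b S" "digit_value b (S @ [d]) mod b = d"
      by (simp_all add: dv_snoc)
    then show ?thesis using ge snoc.prems(1) IH by (simp add: bd_ge)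
  qed
qed

lemma prefix_char:
  assumes b: "b \<ge> 2" and S: "S \<noteq> []" "\<forall>a\<in>set S. a < b" "S ! 0 \<noteq> 0"
  shows "prefix S (base_digits b n) \<longleftrightarrow> (\<exists>k. digit_value b S * b ^ k \<le> n \<and> n < (digit_value b S + 1) * b ^ k)"
proof
  assume "prefix S (base_digits b n)"
  then obtain T where T: "base_digits b n = S @ T" by (auto simp: prefix_def)
  have "n = digit_value b S * b ^ length T + digit_value b T" using bd_value[OF b, of n] T by (simp add: dv_append)
  moreover have "digit_value b T < b ^ length T"
    using dv_lt[of b T] bd_digits[OF b, of n] T b by auto
  ultimately show "\<exists>k. digit_value b S * b ^ k \<le> n \<and> n < (digit_value b S + 1) * b ^ k"
    by (intro exI[of _ "length T"]) auto
next
  assume "\<exists>k. digit_value b S * b ^ k \<le> n \<and> n < (digit_value b S + 1) * b ^ k"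
  then obtain k where k: "digit_value b S * b ^ k \<le> n" "n < (digit_value b S + 1) * b ^ k" by blast
  have "n div b ^ k = digit_value b S" using k by (intro div_nat_eqI) (simp_all add: mult.commute)
  have s0: "digit_value b S \<noteq> 0"
  proof
    assume "digit_value b S = 0"
    then have "S = [0]" using bd_valid[OF b S] b by (simp add: bd_lt)
    then show False using S by simp
  qed
  obtain X where "base_digits b n = base_digits b (n div b ^ k) @ X"
    using bd_div[OF b, of n k] \<open>n div b ^ k = digit_value b S\<close> s0 by auto
  then show "prefix S (base_digits b n)" using \<open>n div b ^ k = digit_value b S\<close> bd_valid[OF b S] by (simp add: prefix_def)
qed


lemma ln_nat_at_top: "filterlim (\<lambda>k::nat. ln (real k)) at_top sequentially"
  by real_asymp

lemma ln_nat_at_infinity: "filterlim (\<lambda>k::nat. ln (real k)) at_infinity sequentially"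
  using filterlim_at_top_imp_at_infinity[OF ln_nat_at_top] .

lemma harm_le_ln: "k \<ge> 1 \<Longrightarrow> harm k \<le> ln (real k) + (1::real)"
  using euler_mascheroni_sequence_decreasing[of 1 k] by (simp add: harm_def)

lemma log_cesaro0:
  fixes w :: "nat \<Rightarrow> real"
  assumes w: "w \<longlonglongrightarrow> 0"
  shows "(\<lambda>k. (\<Sum>j\<in>{1..k}. w j / real j) / ln (real k)) \<longlonglongrightarrow> 0"
proof (rule LIMSEQ_I)
  fix r :: real assume r: "r > 0"
  then have "r / 4 > 0" by simp
  then obtain J where J0: "\<forall>j\<ge>J. norm (w j - 0) < r / 4" using LIMSEQ_D[OF w] by blast
  have J: "\<bar>w j\<bar> < r / 4" if "j \<ge> J" for j using J0 that by simp
  define A where "A = (\<Sum>j<J. \<bar>w j\<bar>)"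
  have A0: "A \<ge> 0" unfolding A_def by (simp add: sum_nonneg)
  have "(\<lambda>k. (A + r/4) / ln (real k)) \<longlonglongrightarrow> 0"
    by (rule tendsto_divide_0[OF tendsto_const ln_nat_at_infinity])
  then obtain N1 where N10: "\<forall>k\<ge>N1. norm ((A + r/4) / ln (real k) - 0) < r / 2"
    using LIMSEQ_D[of _ 0 "r/2"] r by (metis half_gt_zero)
  have N1: "\<bar>(A + r/4) / ln (real k)\<bar> < r / 2" if "k \<ge> N1" for k using N10 that by simp
  show "\<exists>no. \<forall>k\<ge>no. norm ((\<Sum>j\<in>{1..k}. w j / real j) / ln (real k) - 0) < r"
  proof (intro exI allI impI)
    fix k assume k: "k \<ge> max N1 2"
    then have lnk: "ln (real k) > 0" by simp
    have "\<bar>\<Sum>j\<in>{1..k}. w j / real j\<bar> \<le> (\<Sum>j\<in>{1..k}. \<bar>w j\<bar> / real j)"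
      by (rule order_trans[OF sum_abs]) (simp add: abs_divide)
    also have "\<dots> \<le> (\<Sum>j\<in>{1..k}. (if j < J then \<bar>w j\<bar> else 0) + (r/4) * (1 / real j))"
    proof (rule sum_mono)
      fix j assume j: "j \<in> {1..k}"
      show "\<bar>w j\<bar> / real j \<le> (if j < J then \<bar>w j\<bar> else 0) + (r/4) * (1 / real j)"
      proof (cases "j < J")
        case True
        have "\<bar>w j\<bar> / real j \<le> \<bar>w j\<bar> / 1" using j by (intro divide_left_mono) auto
        moreover have "(r/4) * (1 / real j) \<ge> 0" using r by simp
        ultimately show ?thesis using True by simp
      next
        case False
        then have "\<bar>w j\<bar> \<le> r / 4" using J by (simp add: less_imp_le)
        then have "\<bar>w j\<bar> / real j \<le> (r/4) / real j" using j by (intro divide_right_mono) auto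
        then show ?thesis using False by simp
      qed
    qed
    also have "\<dots> = (\<Sum>j\<in>{1..k}. (if j < J then \<bar>w j\<bar> else 0)) + (r/4) * harm k"
      by (simp only: sum.distrib sum_distrib_left[symmetric] harm_def divide_inverse mult_1_left)
    finally have b1: "\<bar>\<Sum>j\<in>{1..k}. w j / real j\<bar> \<le> (\<Sum>j\<in>{1..k}. (if j < J then \<bar>w j\<bar> else 0)) + (r/4) * harm k" .
    have b2: "(\<Sum>j\<in>{1..k}. (if j < J then \<bar>w j\<bar> else 0)) \<le> A"
    proof -
      have "(\<Sum>j\<in>{1..k}. (if j < J then \<bar>w j\<bar> else 0)) = (\<Sum>j\<in>{j\<in>{1..k}. j < J}. \<bar>w j\<bar>)"
        by (rule sum.inter_filter[symmetric]) simp
      also have "\<dots> \<le> A" unfolding A_def by (rule sum_mono2) auto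
      finally show ?thesis .
    qed
    have b3: "(r/4) * harm k \<le> (r/4) * (ln (real k) + 1)"
      using k harm_le_ln[of k] r by (intro mult_left_mono) auto
    have bound: "\<bar>\<Sum>j\<in>{1..k}. w j / real j\<bar> \<le> A + (r/4) * (ln (real k) + 1)"
      using b1 b2 b3 by linarith
    have "\<bar>(\<Sum>j\<in>{1..k}. w j / real j) / ln (real k)\<bar> \<le> (A + (r/4) * (ln (real k) + 1)) / ln (real k)"
      using bound lnk by (simp add: abs_divide divide_right_mono)
    also have "\<dots> = (A + r/4) / ln (real k) + r / 4" using lnk by (simp add: field_simps)
    also have "\<dots> < r/2 + r/4"
    proof -
      have "(A + r/4) / ln (real k) < r/2" using N1[of k] k by (simp only: abs_less_iff)
      then show ?thesis by linarith
    qed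
    also have "\<dots> < r" using r by simp
    finally show "norm ((\<Sum>j\<in>{1..k}. w j / real j) / ln (real k) - 0) < r" by simp
  qed
qed

lemma harm_over_ln: "(\<lambda>k. harm k / ln (real k) :: real) \<longlonglongrightarrow> 1"
proof -
  have "(\<lambda>k. 1 + (harm k - ln (real k)) / ln (real k) :: real) \<longlonglongrightarrow> 1 + 0"
    by (intro tendsto_intros tendsto_divide_0[OF euler_mascheroni_LIMSEQ ln_nat_at_infinity])
  moreover have "eventually (\<lambda>k. 1 + (harm k - ln (real k)) / ln (real k) = harm k / ln (real k)) sequentially"
    using eventually_gt_at_top[of 1] by eventually_elim (simp add: field_simps)
  ultimately show ?thesis using Lim_transform_eventually by fastforce
qed

lemma cesaro_log:
  fixes u :: "nat \<Rightarrow> real"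
  assumes lim: "(\<lambda>k. real k * u k) \<longlonglongrightarrow> L"
  shows "(\<lambda>k. (\<Sum>j\<le>k. u j) / ln (real k)) \<longlonglongrightarrow> L"
proof -
  define w where "w = (\<lambda>k. real k * u k - L)"
  have w: "w \<longlonglongrightarrow> 0" unfolding w_def using tendsto_diff[OF lim tendsto_const[of L]] by simp
  have decomp: "(\<Sum>j\<le>k. u j) = u 0 + L * harm k + (\<Sum>j\<in>{1..k}. w j / real j)" for k
  proof -
    have "{..k} = insert 0 {1..k}" by auto
    then have "(\<Sum>j\<le>k. u j) = u 0 + (\<Sum>j\<in>{1..k}. u j)" by simp
    also have "(\<Sum>j\<in>{1..k}. u j) = (\<Sum>j\<in>{1..k}. L * (1 / real j) + w j / real j)"
      by (rule sum.cong) (auto simp: w_def field_simps)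
    also have "\<dots> = L * harm k + (\<Sum>j\<in>{1..k}. w j / real j)"
      by (simp only: sum.distrib sum_distrib_left[symmetric] harm_def divide_inverse mult_1_left)
    finally show ?thesis by simp
  qed
  have "(\<lambda>k. u 0 / ln (real k) + L * (harm k / ln (real k)) + (\<Sum>j\<in>{1..k}. w j / real j) / ln (real k))
        \<longlonglongrightarrow> 0 + L * 1 + 0"
    by (intro tendsto_intros tendsto_divide_0[OF tendsto_const ln_nat_at_infinity] harm_over_ln log_cesaro0 w)
  then show ?thesis unfolding decomp by (simp add: add_divide_distrib)
qed


definition Dp :: "nat \<Rightarrow> nat \<Rightarrow> nat \<Rightarrow> bool" where
  "Dp s b n \<longleftrightarrow> (\<exists>k. s * b ^ k \<le> n \<and> n < (s + 1) * b ^ k)"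

definition Fs :: "(nat \<Rightarrow> real) \<Rightarrow> nat \<Rightarrow> real" where
  "Fs g N = (\<Sum>n\<le>N. g n)"

definition Gs :: "(nat \<Rightarrow> real) \<Rightarrow> nat \<Rightarrow> nat \<Rightarrow> nat \<Rightarrow> real" where
  "Gs g s b N = (\<Sum>n\<le>N. if Dp s b n then g n else 0)"

lemma sum_atMost_split: "(N1::nat) \<le> N2 \<Longrightarrow> (\<Sum>n\<le>N2. h n) = (\<Sum>n\<le>N1. h n) + (\<Sum>n\<in>{N1<..N2}. h n)"
proof -
  assume "N1 \<le> N2"
  then have "{..N2} = {..N1} \<union> {N1<..N2}" by auto
  moreover have "{..N1} \<inter> {N1<..N2} = {}" by auto
  ultimately show ?thesis by (simp add: sum.union_disjoint)
qed

lemma notD_low: "b \<ge> 1 \<Longrightarrow> n < s \<Longrightarrow> \<not> Dp s b n"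
proof
  assume b: "b \<ge> 1" and n: "n < s" and "Dp s b n"
  then obtain k where k: "s * b ^ k \<le> n" by (auto simp: Dp_def)
  have "s * 1 \<le> s * b ^ k" using b by (intro mult_le_mono2) simp
  then show False using k n by linarith
qed

lemma notD_gap: assumes b: "b \<ge> 2" and s: "s \<ge> 1" and n: "(s + 1) * b ^ k \<le> n" "n < s * b ^ Suc k"
  shows "\<not> Dp s b n"
proof
  assume "Dp s b n"
  then obtain j where j: "s * b ^ j \<le> n" "n < (s + 1) * b ^ j" by (auto simp: Dp_def)
  show False
  proof (cases "j \<le> k")
    case True
    then have "b ^ j \<le> b ^ k" using b by (intro power_increasing) auto
    then have "(s + 1) * b ^ j \<le> (s + 1) * b ^ k" by (intro mult_le_mono2)
    then show False using j n by linarith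
  next
    case False
    then have "b ^ Suc k \<le> b ^ j" using b by (intro power_increasing) auto
    then have "s * b ^ Suc k \<le> s * b ^ j" by (intro mult_le_mono2)
    then show False using j n by linarith
  qed
qed

lemma sum_D_block: "(\<Sum>n\<in>{s * b ^ k - 1<..(s + 1) * b ^ k - 1}. if Dp s b n then g n else 0) =
    (\<Sum>n\<in>{s * b ^ k - 1<..(s + 1) * b ^ k - 1}. g n)"
proof (rule sum.cong)
  fix n assume "n \<in> {s * b ^ k - 1<..(s + 1) * b ^ k - 1}"
  then have "s * b ^ k \<le> n" "n < (s + 1) * b ^ k" by auto
  then show "(if Dp s b n then g n else 0) = g n" by (auto simp: Dp_def)
qed simp

lemma Fs_diff: "N1 \<le> N2 \<Longrightarrow> Fs g N2 - Fs g N1 = (\<Sum>n\<in>{N1<..N2}. g n)"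
  unfolding Fs_def using sum_atMost_split[of N1 N2 g] by simp

lemma block:
  assumes b: "b \<ge> 2" and s: "s \<ge> 1"
  shows "Gs g s b ((s + 1) * b ^ k - 1) = (\<Sum>j\<le>k. Fs g ((s + 1) * b ^ j - 1) - Fs g (s * b ^ j - 1))"
proof (induction k)
  case 0
  have "Gs g s b ((s + 1) * b ^ 0 - 1) = Gs g s b (s - 1) + (\<Sum>n\<in>{s - 1<..s}. if Dp s b n then g n else 0)"
    unfolding Gs_def using sum_atMost_split[of "s - 1" s] by simp
  also have "Gs g s b (s - 1) = 0" unfolding Gs_def
    by (rule sum.neutral) (use notD_low[of b _ s] b s in auto)
  also have "(\<Sum>n\<in>{s - 1<..s}. if Dp s b n then g n else 0) = (\<Sum>n\<in>{s - 1<..s}. g n)"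
    using sum_D_block[where k=0 and s=s and b=b and g=g] by simp
  also have "\<dots> = Fs g ((s + 1) * b ^ 0 - 1) - Fs g (s * b ^ 0 - 1)" using Fs_diff[of "s - 1" s g] by simp
  finally show ?case by simp
next
  case (Suc k)
  define a where "a = (\<lambda>k. (s + 1) * b ^ k - 1)"
  define c where "c = (\<lambda>k. s * b ^ k - 1)"
  have pos1: "(s + 1) * b ^ k \<ge> 1" "s * b ^ Suc k \<ge> 1" using b s by (simp_all add: Suc_le_eq)
  have le1: "(s + 1) * b ^ k \<le> s * b ^ Suc k"
  proof -
    have "s * 2 \<le> s * b" using b by (intro mult_le_mono2)
    then have "s + 1 \<le> s * b" using s by linarith
    then have "(s + 1) * b ^ k \<le> (s * b) * b ^ k" by (intro mult_le_mono1)
    then show ?thesis by (simp add: mult.assoc)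
  qed
  have ac: "a k \<le> c (Suc k)" using le1 unfolding a_def c_def by linarith
  have ca: "c (Suc k) \<le> a (Suc k)" unfolding a_def c_def by (intro diff_le_mono) simp
  have "Gs g s b (a (Suc k)) = Gs g s b (a k) + (\<Sum>n\<in>{a k<..c (Suc k)}. if Dp s b n then g n else 0)
      + (\<Sum>n\<in>{c (Suc k)<..a (Suc k)}. if Dp s b n then g n else 0)"
  proof -
    let ?h = "\<lambda>n. if Dp s b n then g n else 0"
    have e1: "(\<Sum>n\<le>a (Suc k). ?h n) = (\<Sum>n\<le>a k. ?h n) + (\<Sum>n\<in>{a k<..a (Suc k)}. ?h n)"
      by (rule sum_atMost_split[OF order.trans[OF ac ca]])
    have e2: "(\<Sum>n\<le>a (Suc k). ?h n) = (\<Sum>n\<le>c (Suc k). ?h n) + (\<Sum>n\<in>{c (Suc k)<..a (Suc k)}. ?h n)"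
      by (rule sum_atMost_split[OF ca])
    have e3: "(\<Sum>n\<le>c (Suc k). ?h n) = (\<Sum>n\<le>a k. ?h n) + (\<Sum>n\<in>{a k<..c (Suc k)}. ?h n)"
      by (rule sum_atMost_split[OF ac])
    show ?thesis unfolding Gs_def using e1 e2 e3 by linarith
  qed
  also have "(\<Sum>n\<in>{a k<..c (Suc k)}. if Dp s b n then g n else 0) = 0"
  proof (rule sum.neutral, intro ballI)
    fix n assume "n \<in> {a k<..c (Suc k)}"
    then have "(s + 1) * b ^ k \<le> n" "n < s * b ^ Suc k" using pos1 unfolding a_def c_def by auto
    then show "(if Dp s b n then g n else 0) = 0" using notD_gap[OF b s] by simp
  qed
  also have "(\<Sum>n\<in>{c (Suc k)<..a (Suc k)}. if Dp s b n then g n else 0) = (\<Sum>n\<in>{c (Suc k)<..a (Suc k)}. g n)"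
    unfolding a_def c_def by (rule sum_D_block)
  also have "\<dots> = Fs g (a (Suc k)) - Fs g (c (Suc k))" using Fs_diff[OF ca] by simp
  finally show ?case using Suc unfolding a_def c_def by simp
qed


lemma E_lim: assumes "E \<in> o[at_top](\<lambda>x::real. 1 / ln x)"
  shows "((\<lambda>x. E x * ln x) \<longlongrightarrow> 0) at_top"
  using smalloD_tendsto[OF assms] by simp

lemma seq_E:
  fixes E :: "real \<Rightarrow> real" and w :: "nat \<Rightarrow> real"
  assumes E: "((\<lambda>x. E x * ln x) \<longlongrightarrow> 0) at_top" and w: "filterlim w at_top sequentially"
    and wr: "(\<lambda>k. real k / ln (w k)) \<longlonglongrightarrow> M"
  shows "(\<lambda>k. real k * E (w k)) \<longlonglongrightarrow> 0"
proof -
  have "(\<lambda>k. E (w k) * ln (w k)) \<longlonglongrightarrow> 0" using filterlim_compose[OF E w] by simp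
  then have "(\<lambda>k. (E (w k) * ln (w k)) * (real k / ln (w k))) \<longlonglongrightarrow> 0 * M" by (intro tendsto_mult wr)
  moreover have "eventually (\<lambda>k. (E (w k) * ln (w k)) * (real k / ln (w k)) = real k * E (w k)) sequentially"
  proof -
    have "eventually (\<lambda>k. w k \<ge> 2) sequentially" using w by (simp add: filterlim_at_top)
    then show ?thesis
    proof eventually_elim
      case (elim k)
      then have "ln (w k) > 0" by simp
      then show ?case by (simp add: field_simps)
    qed
  qed
  ultimately show ?thesis using Lim_transform_eventually by fastforce
qed

lemma asy1: fixes B \<sigma> :: real assumes "B > 1" "\<sigma> \<ge> 1"
  shows "(\<lambda>k::nat. real k * (ln (ln ((\<sigma>+1) * B^k - 1)) - ln (ln (\<sigma> * B^k - 1)))) \<longlonglongrightarrow> (ln (\<sigma>+1) - ln \<sigma>) / ln B"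
proof -
  have "(\<lambda>k::nat. real k * (ln (ln ((\<sigma>+1) * B^k - 1)) - ln (ln (\<sigma> * B^k - 1)))) \<longlonglongrightarrow> inverse (ln B) * ln (\<sigma> + 1) - inverse (ln B) * ln \<sigma>"
    using assms by real_asymp
  moreover have "inverse (ln B) * ln (\<sigma> + 1) - inverse (ln B) * ln \<sigma> = (ln (\<sigma>+1) - ln \<sigma>) / ln B"
    by (simp add: divide_inverse algebra_simps)
  ultimately show ?thesis by simp
qed

lemma asy2: fixes B \<sigma> :: real assumes "B > 1" "\<sigma> \<ge> 1"
  shows "(\<lambda>k::nat. real k / ln (\<sigma> * B^k - 1)) \<longlonglongrightarrow> inverse (ln B)"
  using assms by real_asymp

lemma asy3: fixes B \<sigma> :: real assumes "B > 1" "\<sigma> \<ge> 1"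
  shows "filterlim (\<lambda>k::nat. \<sigma> * B^k - 1) at_top sequentially"
  using assms by real_asymp

lemma u_lim:
  fixes g :: "nat \<Rightarrow> real" and s b :: nat and \<delta> C :: real
  assumes s: "s \<ge> 1" and b: "b \<ge> 2"
    and hyp: "(\<lambda>x. Fs g (nat \<lfloor>x\<rfloor>) - (\<delta> * ln (ln x) + C)) \<in> o[at_top](\<lambda>x. 1 / ln x)"
  shows "(\<lambda>k. real k * (Fs g ((s + 1) * b ^ k - 1) - Fs g (s * b ^ k - 1)))
           \<longlonglongrightarrow> \<delta> * ((ln (real s + 1) - ln (real s)) / ln (real b))"
proof -
  define E where "E = (\<lambda>x. Fs g (nat \<lfloor>x\<rfloor>) - (\<delta> * ln (ln x) + C))"
  define \<sigma> where "\<sigma> = real s"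
  define B where "B = real b"
  have \<sigma>: "\<sigma> \<ge> 1" using s by (simp add: \<sigma>_def)
  have B: "B > 1" using b by (simp add: B_def)
  have El: "((\<lambda>x. E x * ln x) \<longlongrightarrow> 0) at_top" using E_lim hyp unfolding E_def by blast
  have ra: "real ((s + 1) * b ^ k - 1) = (\<sigma> + 1) * B ^ k - 1" for k
  proof -
    have "(s + 1) * b ^ k \<ge> 1" using b by (simp add: Suc_le_eq)
    then show ?thesis by (simp add: of_nat_diff \<sigma>_def B_def algebra_simps)
  qed
  have rc: "real (s * b ^ k - 1) = \<sigma> * B ^ k - 1" for k
  proof -
    have "s * b ^ k \<ge> 1" using b s by (simp add: Suc_le_eq)
    then show ?thesis by (simp add: of_nat_diff \<sigma>_def B_def)
  qed
  have FE: "Fs g N = E (real N) + (\<delta> * ln (ln (real N)) + C)" for N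
    unfolding E_def by simp
  have eq: "real k * (Fs g ((s + 1) * b ^ k - 1) - Fs g (s * b ^ k - 1)) =
     \<delta> * (real k * (ln (ln ((\<sigma>+1) * B^k - 1)) - ln (ln (\<sigma> * B^k - 1))))
     + real k * E ((\<sigma>+1) * B^k - 1) - real k * E (\<sigma> * B^k - 1)" for k
    unfolding FE ra rc by (simp add: algebra_simps)
  have l1: "(\<lambda>k. real k * E ((\<sigma>+1) * B^k - 1)) \<longlonglongrightarrow> 0"
    using seq_E[OF El asy3[OF B, of "\<sigma>+1"] asy2[OF B, of "\<sigma>+1"]] \<sigma> by simp
  have l2: "(\<lambda>k. real k * E (\<sigma> * B^k - 1)) \<longlonglongrightarrow> 0"
    using seq_E[OF El asy3[OF B \<sigma>] asy2[OF B \<sigma>]] .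
  have "(\<lambda>k. \<delta> * (real k * (ln (ln ((\<sigma>+1) * B^k - 1)) - ln (ln (\<sigma> * B^k - 1))))
     + real k * E ((\<sigma>+1) * B^k - 1) - real k * E (\<sigma> * B^k - 1)) \<longlonglongrightarrow> \<delta> * ((ln (\<sigma>+1) - ln \<sigma>) / ln B) + 0 - 0"
    by (intro tendsto_intros asy1[OF B \<sigma>] l1 l2)
  then show ?thesis unfolding eq by (simp add: \<sigma>_def B_def)
qed


lemma T_lim:
  fixes g :: "nat \<Rightarrow> real" and s b :: nat and \<delta> C :: real
  assumes s: "s \<ge> 1" and b: "b \<ge> 2"
    and hyp: "(\<lambda>x. Fs g (nat \<lfloor>x\<rfloor>) - (\<delta> * ln (ln x) + C)) \<in> o[at_top](\<lambda>x. 1 / ln x)"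
  shows "(\<lambda>k. Gs g s b ((s + 1) * b ^ k - 1) / ln (real k))
           \<longlonglongrightarrow> \<delta> * ((ln (real s + 1) - ln (real s)) / ln (real b))"
  unfolding block[OF b s] by (rule cesaro_log[OF u_lim[OF s b hyp]])

lemma asy4: fixes B c :: real assumes "B > 1"
  shows "((\<lambda>x. ln (ln x / ln B + c) / ln (ln x)) \<longlongrightarrow> 1) at_top"
  using assms by real_asymp

lemma asy5: fixes B c :: real assumes "B > 1"
  shows "filterlim (\<lambda>x. ln x / ln B + c) at_top at_top"
  using assms by real_asymp

lemma lnln_pos: "eventually (\<lambda>x::real. ln (ln x) > 0) at_top"
  by real_asymp

lemma comp_lim:
  fixes T :: "nat \<Rightarrow> real" and \<psi> :: "real \<Rightarrow> nat" and B cl ch :: real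
  assumes Tl: "(\<lambda>k. T k / ln (real k)) \<longlonglongrightarrow> L" and B: "B > 1"
    and lo: "eventually (\<lambda>x. ln x / ln B + cl \<le> real (\<psi> x)) at_top"
    and hi: "eventually (\<lambda>x. real (\<psi> x) \<le> ln x / ln B + ch) at_top"
  shows "((\<lambda>x. T (\<psi> x) / ln (ln x)) \<longlongrightarrow> L) at_top"
proof -
  have f1: "filterlim (\<lambda>x. ln x / ln B + cl) at_top at_top" by (rule asy5[OF B])
  have \<psi>r: "filterlim (\<lambda>x. real (\<psi> x)) at_top at_top" by (rule filterlim_at_top_mono[OF f1 lo])
  have \<psi>l: "filterlim \<psi> at_top at_top"
    unfolding filterlim_at_top
  proof
    fix Z :: nat
    have "\<forall>Z::real. eventually (\<lambda>x. Z \<le> real (\<psi> x)) at_top" using \<psi>r by (simp add: filterlim_at_top)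
    then have "eventually (\<lambda>x. real Z \<le> real (\<psi> x)) at_top" by blast
    then show "eventually (\<lambda>x. Z \<le> \<psi> x) at_top" by eventually_elim simp
  qed
  have l1: "((\<lambda>x. T (\<psi> x) / ln (real (\<psi> x))) \<longlongrightarrow> L) at_top"
    using filterlim_compose[OF Tl \<psi>l] by simp
  have pos1: "eventually (\<lambda>x. ln x / ln B + cl > 0) at_top"
    using f1 by (simp add: filterlim_at_top_dense)
  have l2: "((\<lambda>x. ln (real (\<psi> x)) / ln (ln x)) \<longlongrightarrow> 1) at_top"
  proof (rule tendsto_sandwich[OF _ _ asy4[OF B, of cl] asy4[OF B, of ch]])
    show "eventually (\<lambda>x. ln (ln x / ln B + cl) / ln (ln x) \<le> ln (real (\<psi> x)) / ln (ln x)) at_top"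
      using lo pos1 lnln_pos
    proof eventually_elim
      case (elim x)
      then have "ln (ln x / ln B + cl) \<le> ln (real (\<psi> x))" by simp
      then show ?case using elim by (simp add: divide_right_mono)
    qed
    show "eventually (\<lambda>x. ln (real (\<psi> x)) / ln (ln x) \<le> ln (ln x / ln B + ch) / ln (ln x)) at_top"
      using lo hi pos1 lnln_pos
    proof eventually_elim
      case (elim x)
      then have "ln (real (\<psi> x)) \<le> ln (ln x / ln B + ch)" by simp
      then show ?case using elim by (simp add: divide_right_mono)
    qed
  qed
  have "((\<lambda>x. (T (\<psi> x) / ln (real (\<psi> x))) * (ln (real (\<psi> x)) / ln (ln x))) \<longlongrightarrow> L * 1) at_top"
    by (rule tendsto_mult[OF l1 l2])
  moreover have "eventually (\<lambda>x. (T (\<psi> x) / ln (real (\<psi> x))) * (ln (real (\<psi> x)) / ln (ln x)) = T (\<psi> x) / ln (ln x)) at_top"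
  proof -
    have "eventually (\<lambda>x. \<psi> x \<ge> 2) at_top" using \<psi>l by (simp add: filterlim_at_top)
    then show ?thesis
    proof eventually_elim
      case (elim x)
      then have "ln (real (\<psi> x)) > 0" by simp
      then show ?case by simp
    qed
  qed
  ultimately show ?thesis using Lim_transform_eventually by fastforce
qed


lemma Gs_mono: "(\<And>n. g n \<ge> 0) \<Longrightarrow> N1 \<le> N2 \<Longrightarrow> Gs g s b N1 \<le> Gs g s b N2"
  unfolding Gs_def by (rule sum_mono2) auto

lemma main_analytic:
  fixes g :: "nat \<Rightarrow> real" and s b :: nat and \<delta> C :: real
  assumes g0: "\<And>n. g n \<ge> 0" and s: "s \<ge> 1" and b: "b \<ge> 2"
    and hyp: "(\<lambda>x. Fs g (nat \<lfloor>x\<rfloor>) - (\<delta> * ln (ln x) + C)) \<in> o[at_top](\<lambda>x. 1 / ln x)"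
  shows "((\<lambda>x. Gs g s b (nat \<lfloor>x\<rfloor>) / ln (ln x)) \<longlongrightarrow> \<delta> * ((ln (real s + 1) - ln (real s)) / ln (real b))) at_top"
proof -
  define L where "L = \<delta> * ((ln (real s + 1) - ln (real s)) / ln (real b))"
  define T where "T = (\<lambda>k. Gs g s b ((s + 1) * b ^ k - 1))"
  define B where "B = real b"
  have B: "B > 1" using b by (simp add: B_def)
  have Tl: "(\<lambda>k. T k / ln (real k)) \<longlonglongrightarrow> L" unfolding T_def L_def by (rule T_lim[OF s b hyp])
  define \<phi> where "\<phi> = (\<lambda>x. nat \<lfloor>log B x\<rfloor>)"
  have phi: "real (\<phi> x) \<le> log B x" "log B x < real (\<phi> x) + 1" if x: "x \<ge> 1" for x
  proof -
    have "log B x \<ge> 0" using x B by simp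
    then show "real (\<phi> x) \<le> log B x" "log B x < real (\<phi> x) + 1" unfolding \<phi>_def by linarith+
  qed
  have pow: "B ^ \<phi> x \<le> x" "x < B ^ Suc (\<phi> x)" if x: "x \<ge> 1" for x
  proof -
    have "B powr real (\<phi> x) \<le> x" using le_log_iff[OF B, of x "real (\<phi> x)"] phi[OF x] x by simp
    then show "B ^ \<phi> x \<le> x" using B by (simp add: powr_realpow)
    have "x < B powr real (Suc (\<phi> x))" using log_less_iff[OF B, of x "real (Suc (\<phi> x))"] phi[OF x] x by simp
    moreover have "B powr real (Suc (\<phi> x)) = B ^ Suc (\<phi> x)" using B by (intro powr_realpow) simp
    ultimately show "x < B ^ Suc (\<phi> x)" by simp
  qed
  have logdef: "log B x = ln x / ln B" for x by (simp add: log_def)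
  have sb: "s + 1 \<le> b ^ s"
  proof -
    have "s < 2 ^ s" by (rule less_exp)
    also have "(2::nat) ^ s \<le> b ^ s" using b by (rule power_mono) simp
    finally show ?thesis by simp
  qed
  have up: "eventually (\<lambda>x. Gs g s b (nat \<lfloor>x\<rfloor>) \<le> T (\<phi> x + 1)) at_top"
    using eventually_ge_at_top[of 1]
  proof eventually_elim
    case (elim x)
    have "real (nat \<lfloor>x\<rfloor>) \<le> x" using elim by linarith
    also have "x < B ^ Suc (\<phi> x)" by (rule pow(2)[OF elim])
    finally have "nat \<lfloor>x\<rfloor> < b ^ Suc (\<phi> x)" unfolding B_def by (simp only: of_nat_power[symmetric] of_nat_less_iff)
    moreover have "b ^ Suc (\<phi> x) \<le> (s + 1) * b ^ Suc (\<phi> x)" by simp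
    ultimately have "nat \<lfloor>x\<rfloor> \<le> (s + 1) * b ^ (\<phi> x + 1) - 1" by simp
    then show ?case unfolding T_def by (rule Gs_mono[OF g0])
  qed
  have lo: "eventually (\<lambda>x. T (\<phi> x - s) \<le> Gs g s b (nat \<lfloor>x\<rfloor>)) at_top"
    using eventually_ge_at_top[of "B ^ s"] eventually_ge_at_top[of 1]
  proof eventually_elim
    case (elim x)
    have "B powr real s \<le> x" using elim B by (simp add: powr_realpow)
    then have "real s \<le> log B x" using le_log_iff[OF B, of x "real s"] elim by simp
    then have phis: "\<phi> x \<ge> s" unfolding \<phi>_def by linarith
    have "(s + 1) * b ^ (\<phi> x - s) \<le> b ^ s * b ^ (\<phi> x - s)" using sb by (rule mult_le_mono1)
    also have "\<dots> = b ^ \<phi> x" using phis by (simp add: power_add[symmetric])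
    finally have "(s + 1) * b ^ (\<phi> x - s) - 1 \<le> b ^ \<phi> x" by simp
    also have "b ^ \<phi> x \<le> nat \<lfloor>x\<rfloor>"
    proof -
      have "real (b ^ \<phi> x) \<le> x" using pow(1)[OF elim(2)] unfolding B_def by simp
      then show ?thesis by (simp add: le_nat_floor)
    qed
    finally show ?case unfolding T_def by (rule Gs_mono[OF g0])
  qed
  have l_up: "((\<lambda>x. T (\<phi> x + 1) / ln (ln x)) \<longlongrightarrow> L) at_top"
  proof (rule comp_lim[OF Tl B, where cl=0 and ch=1 and \<psi>="\<lambda>x. \<phi> x + 1"])
    show "eventually (\<lambda>x. ln x / ln B + 0 \<le> real (\<phi> x + 1)) at_top"
      using eventually_ge_at_top[of 1] by eventually_elim (use phi logdef in fastforce)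
    show "eventually (\<lambda>x. real (\<phi> x + 1) \<le> ln x / ln B + 1) at_top"
      using eventually_ge_at_top[of 1] by eventually_elim (use phi logdef in fastforce)
  qed
  have l_lo: "((\<lambda>x. T (\<phi> x - s) / ln (ln x)) \<longlongrightarrow> L) at_top"
  proof (rule comp_lim[OF Tl B, where cl="- real s - 1" and ch=0 and \<psi>="\<lambda>x. \<phi> x - s"])
    show "eventually (\<lambda>x. ln x / ln B + (- real s - 1) \<le> real (\<phi> x - s)) at_top"
      using eventually_ge_at_top[of 1]
    proof eventually_elim
      case (elim x)
      have "real (\<phi> x - s) \<ge> real (\<phi> x) - real s" by linarith
      then show ?case using phi[OF elim] logdef[of x] by linarith
    qed
    show "eventually (\<lambda>x. real (\<phi> x - s) \<le> ln x / ln B + 0) at_top"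
      using eventually_ge_at_top[of 1]
    proof eventually_elim
      case (elim x)
      have "real (\<phi> x - s) \<le> real (\<phi> x)" by simp
      then show ?case using phi[OF elim] logdef[of x] by linarith
    qed
  qed
  have "((\<lambda>x. Gs g s b (nat \<lfloor>x\<rfloor>) / ln (ln x)) \<longlongrightarrow> L) at_top"
  proof (rule tendsto_sandwich[OF _ _ l_lo l_up])
    show "eventually (\<lambda>x. T (\<phi> x - s) / ln (ln x) \<le> Gs g s b (nat \<lfloor>x\<rfloor>) / ln (ln x)) at_top"
      using lo lnln_pos by eventually_elim (simp add: divide_right_mono)
    show "eventually (\<lambda>x. Gs g s b (nat \<lfloor>x\<rfloor>) / ln (ln x) \<le> T (\<phi> x + 1) / ln (ln x)) at_top"
      using up lnln_pos by eventually_elim (simp add: divide_right_mono)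
  qed
  then show ?thesis unfolding L_def .
qed


lemma rns_group:
  assumes fin: "finite {P\<in>B. real (abs_norm K P) \<le> x}" and N1: "\<And>P. P \<in> B \<Longrightarrow> abs_norm K P \<ge> 1"
  shows "recip_norm_sum K B x = (\<Sum>n\<le>nat \<lfloor>x\<rfloor>. \<Sum>P\<in>{P\<in>B. abs_norm K P = n}. 1 / real n)"
proof -
  define M where "M = nat \<lfloor>x\<rfloor>"
  have eqset: "{P\<in>B. real (abs_norm K P) \<le> x} = {P\<in>B. abs_norm K P \<le> M}"
  proof (intro Collect_cong conj_cong refl)
    fix P assume P: "P \<in> B"
    show "real (abs_norm K P) \<le> x \<longleftrightarrow> abs_norm K P \<le> M"
    proof
      assume "real (abs_norm K P) \<le> x" then show "abs_norm K P \<le> M" unfolding M_def by (rule le_nat_floor)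
    next
      assume "abs_norm K P \<le> M"
      moreover have "abs_norm K P \<ge> 1" using N1[OF P] .
      ultimately have "M \<ge> 1" by simp
      then have "real (abs_norm K P) \<le> real M" using \<open>abs_norm K P \<le> M\<close> by simp
      also have "real M \<le> x" using \<open>M \<ge> 1\<close> unfolding M_def by linarith
      finally show "real (abs_norm K P) \<le> x" .
    qed
  qed
  have finS: "finite {P\<in>B. abs_norm K P \<le> M}" using fin eqset by simp
  have "recip_norm_sum K B x = (\<Sum>P\<in>{P\<in>B. abs_norm K P \<le> M}. 1 / real (abs_norm K P))"
    unfolding recip_norm_sum_def eqset ..
  also have "\<dots> = (\<Sum>n\<le>M. \<Sum>P\<in>{P\<in>{P\<in>B. abs_norm K P \<le> M}. abs_norm K P = n}. 1 / real (abs_norm K P))"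
    by (rule sum.group[symmetric]) (use finS in auto)
  also have "\<dots> = (\<Sum>n\<le>M. \<Sum>P\<in>{P\<in>B. abs_norm K P = n}. 1 / real n)"
  proof (rule sum.cong[OF refl])
    fix n assume "n \<in> {..M}"
    then have "{P\<in>{P\<in>B. abs_norm K P \<le> M}. abs_norm K P = n} = {P\<in>B. abs_norm K P = n}" by auto
    then show "(\<Sum>P\<in>{P\<in>{P\<in>B. abs_norm K P \<le> M}. abs_norm K P = n}. 1 / real (abs_norm K P)) =
               (\<Sum>P\<in>{P\<in>B. abs_norm K P = n}. 1 / real n)" by simp
  qed
  finally show ?thesis unfolding M_def .
qed

theorem theorem1p1:
  fixes K :: "complex set" and A :: "complex set set" and \<delta> C :: real
    and b :: nat and S :: "nat list"
  assumes "number_field K"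
    and "A \<subseteq> nonzero_primes K"
    and "\<delta> \<ge> 0"
    and "(\<lambda>x. recip_norm_sum K A x - (\<delta> * ln (ln x) + C)) \<in> o[at_top](\<lambda>x. 1 / ln x)"
    and "b \<ge> 2"
    and "length S \<ge> 1"
    and "\<forall>a\<in>set S. a < b"
    and "S ! 0 \<noteq> 0"
  shows "upper_log_density K (leading_digit_subset K A b S) = ereal (\<delta> * log b (1 + 1 / real (digit_value b S)))
       \<and> lower_log_density K (leading_digit_subset K A b S) = ereal (\<delta> * log b (1 + 1 / real (digit_value b S)))"
proof -
  note nf = assms(1) and AP = assms(2) and hyp = assms(4) and b = assms(5)
  have S: "S \<noteq> []" "\<forall>a\<in>set S. a < b" "S ! 0 \<noteq> 0" using assms(6-8) by auto
  define s where "s = digit_value b S"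
  have s1: "s \<ge> 1"
  proof (rule ccontr)
    assume "\<not> s \<ge> 1"
    then have "s = 0" by simp
    then have "S = [0]" using bd_valid[OF b S] b unfolding s_def by (simp add: bd_lt)
    then show False using S by simp
  qed
  define g where "g = (\<lambda>n. \<Sum>P\<in>{P\<in>A. abs_norm K P = n}. 1 / real n)"
  have g0: "g n \<ge> 0" for n unfolding g_def by (rule sum_nonneg) simp
  have finA: "finite {P\<in>B. real (abs_norm K P) \<le> x}" if "B \<subseteq> A" for B x
    by (rule finite_subset[OF _ bounded_primes_finite[OF nf, of x]]) (use that AP in auto)
  have N1: "abs_norm K P \<ge> 1" if "P \<in> A" for P using norm_ge2[OF nf] that AP by force
  have FA: "recip_norm_sum K A x = Fs g (nat \<lfloor>x\<rfloor>)" for x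
    unfolding Fs_def g_def by (rule rns_group[OF finA N1]) auto
  have LD: "leading_digit_subset K A b S \<subseteq> A" by (auto simp: leading_digit_subset_def)
  have GA: "recip_norm_sum K (leading_digit_subset K A b S) x = Gs g s b (nat \<lfloor>x\<rfloor>)" for x
  proof -
    have "recip_norm_sum K (leading_digit_subset K A b S) x =
       (\<Sum>n\<le>nat \<lfloor>x\<rfloor>. \<Sum>P\<in>{P\<in>leading_digit_subset K A b S. abs_norm K P = n}. 1 / real n)"
      by (rule rns_group[OF finA[OF LD] N1]) (use LD in auto)
    also have "\<dots> = Gs g s b (nat \<lfloor>x\<rfloor>)" unfolding Gs_def
    proof (rule sum.cong[OF refl])
      fix n
      have "{P\<in>leading_digit_subset K A b S. abs_norm K P = n} = (if Dp s b n then {P\<in>A. abs_norm K P = n} else {})"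
        using prefix_char[OF b S] unfolding leading_digit_subset_def Dp_def s_def by auto
      then show "(\<Sum>P\<in>{P\<in>leading_digit_subset K A b S. abs_norm K P = n}. 1 / real n) = (if Dp s b n then g n else 0)"
        unfolding g_def by simp
    qed
    finally show ?thesis .
  qed
  have hyp': "(\<lambda>x. Fs g (nat \<lfloor>x\<rfloor>) - (\<delta> * ln (ln x) + C)) \<in> o[at_top](\<lambda>x. 1 / ln x)"
    using hyp unfolding FA .
  have lim: "((\<lambda>x. Gs g s b (nat \<lfloor>x\<rfloor>) / ln (ln x)) \<longlongrightarrow> \<delta> * ((ln (real s + 1) - ln (real s)) / ln (real b))) at_top"
    by (rule main_analytic[OF g0 s1 b hyp'])
  have Leq: "\<delta> * ((ln (real s + 1) - ln (real s)) / ln (real b)) = \<delta> * log b (1 + 1 / real (digit_value b S))"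
  proof -
    have "1 + 1 / real s = (real s + 1) / real s" using s1 by (simp add: field_simps)
    then have "ln (1 + 1 / real s) = ln (real s + 1) - ln (real s)" using s1 by (simp add: ln_div)
    then show ?thesis unfolding s_def log_def by simp
  qed
  have lim': "((\<lambda>x. ereal (recip_norm_sum K (leading_digit_subset K A b S) x / ln (ln x)))
      \<longlongrightarrow> ereal (\<delta> * log b (1 + 1 / real (digit_value b S)))) at_top"
    unfolding GA Leq[symmetric] by (rule tendsto_ereal[OF lim])
  show ?thesis unfolding upper_log_density_def lower_log_density_def
    using lim_imp_Limsup[OF trivial_limit_at_top_linorder lim'] lim_imp_Liminf[OF trivial_limit_at_top_linorder lim']
    by simp
qed


end
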